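(* Let $X$ be a Dedekind complete Riesz space with weak order unit $e$ and conditional expectation operator $T$ with $Te=e$. If $(x_{\alpha})$ is a decreasing net in $X_{+}$ that converges to $0$ in $T$-conditional probability, then $x_{\alpha}\downarrow0$.
   Context: A conditional expectation operator on $X$ is a strictly positive, order continuous linear projection $T$ with $Te=e$ whose range is a Dedekind complete Riesz subspace. $x_\alpha\to 0$ in $T$-conditional probability means that for every $\epsilon>0$ the net $TP_{(|x_\alpha|-\epsilon e)^{+}}e$ order converges to $0$, where $P_y$ is the band projection onto the band generated by $y$; order convergence $y_\alpha\to 0$ means $|y_\alpha|$ is eventually dominated by the terms of some net decreasing to $0$. *)

theory Defs
  imports Complex_Main "HOL-Library.Lattice_Algebras"
begin

text \<open>Riesz spaces are modelled by the type class
  ordered_real_vector + lattice_ab_group_add (an ordered real vector space that is a lattice).\<close>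

definition absv :: "'a::{ordered_real_vector, lattice_ab_group_add} \<Rightarrow> 'a" where
  "absv x = sup x (- x)"

definition posp :: "'a::{ordered_real_vector, lattice_ab_group_add} \<Rightarrow> 'a" where
  "posp x = sup x 0"

definition is_sup_in :: "'a::order set \<Rightarrow> 'a set \<Rightarrow> 'a \<Rightarrow> bool" where
  "is_sup_in U S a \<longleftrightarrow> a \<in> U \<and> (\<forall>s\<in>S. s \<le> a) \<and> (\<forall>b\<in>U. (\<forall>s\<in>S. s \<le> b) \<longrightarrow> a \<le> b)"

definition is_inf :: "'a::order set \<Rightarrow> 'a \<Rightarrow> bool" where
  "is_inf S a \<longleftrightarrow> (\<forall>s\<in>S. a \<le> s) \<and> (\<forall>b. (\<forall>s\<in>S. b \<le> s) \<longrightarrow> b \<le> a)"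

definition dedekind_complete_on :: "'a::order set \<Rightarrow> bool" where
  "dedekind_complete_on U \<longleftrightarrow>
     (\<forall>S. S \<subseteq> U \<and> S \<noteq> {} \<and> (\<exists>b\<in>U. \<forall>s\<in>S. s \<le> b) \<longrightarrow> (\<exists>a. is_sup_in U S a))"

definition dedekind_complete :: "'a::order itself \<Rightarrow> bool" where
  "dedekind_complete _ \<longleftrightarrow> dedekind_complete_on (UNIV :: 'a set)"

text \<open>Disjoint complement and the band generated by y (= {y}^dd, valid in Archimedean,
  in particular Dedekind complete, Riesz spaces).\<close>
definition disj_compl :: "'a::{ordered_real_vector, lattice_ab_group_add} set \<Rightarrow> 'a set" where
  "disj_compl S = {x. \<forall>s\<in>S. inf (absv x) (absv s) = 0}"

definition band_gen :: "'a::{ordered_real_vector, lattice_ab_group_add} \<Rightarrow> 'a set" where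
  "band_gen y = disj_compl (disj_compl {y})"

definition band_proj :: "'a::{ordered_real_vector, lattice_ab_group_add} \<Rightarrow> 'a \<Rightarrow> 'a" where
  "band_proj y x = (THE p. p \<in> band_gen y \<and> x - p \<in> disj_compl (band_gen y))"

definition weak_order_unit :: "'a::{ordered_real_vector, lattice_ab_group_add} \<Rightarrow> bool" where
  "weak_order_unit e \<longleftrightarrow> 0 \<le> e \<and> (\<forall>x. inf (absv x) e = 0 \<longrightarrow> x = 0)"

definition downward_directed :: "'a::order set \<Rightarrow> bool" where
  "downward_directed D \<longleftrightarrow> D \<noteq> {} \<and> (\<forall>a\<in>D. \<forall>b\<in>D. \<exists>c\<in>D. c \<le> a \<and> c \<le> b)"

definition directed_index :: "'i::preorder itself \<Rightarrow> bool" where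
  "directed_index _ \<longleftrightarrow> (\<forall>a b :: 'i. \<exists>c. a \<le> c \<and> b \<le> c)"

text \<open>Order convergence of a net y to 0: |y_alpha| is eventually dominated by each term of some
  net decreasing to 0; the range of such a net is a downward directed set with infimum 0
  (and conversely every such set, indexed by itself, is a net decreasing to 0).\<close>
definition order_conv_0 :: "('i::preorder \<Rightarrow> 'a::{ordered_real_vector, lattice_ab_group_add}) \<Rightarrow> bool" where
  "order_conv_0 y \<longleftrightarrow> (\<exists>Z. downward_directed Z \<and> is_inf Z 0 \<and>
      (\<forall>z\<in>Z. \<exists>a0. \<forall>a. a0 \<le> a \<longrightarrow> absv (y a) \<le> z))"

definition decreasing_net :: "('i::preorder \<Rightarrow> 'a::order) \<Rightarrow> bool" where
  "decreasing_net x \<longleftrightarrow> (\<forall>a b. a \<le> b \<longrightarrow> x b \<le> x a)"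

definition decr_to_0 :: "('i::preorder \<Rightarrow> 'a::{ordered_real_vector, lattice_ab_group_add}) \<Rightarrow> bool" where
  "decr_to_0 x \<longleftrightarrow> decreasing_net x \<and> is_inf (range x) 0"

definition linear_op :: "('a::real_vector \<Rightarrow> 'a) \<Rightarrow> bool" where
  "linear_op T \<longleftrightarrow> (\<forall>x y. T (x + y) = T x + T y) \<and> (\<forall>c x. T (c *\<^sub>R x) = c *\<^sub>R T x)"

definition strictly_positive :: "('a::{ordered_real_vector, lattice_ab_group_add} \<Rightarrow> 'a) \<Rightarrow> bool" where
  "strictly_positive T \<longleftrightarrow> (\<forall>x. 0 \<le> x \<longrightarrow> 0 \<le> T x) \<and> (\<forall>x. 0 < x \<longrightarrow> 0 < T x)"

definition order_continuous :: "('a::{ordered_real_vector, lattice_ab_group_add} \<Rightarrow> 'a) \<Rightarrow> bool" where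
  "order_continuous T \<longleftrightarrow> (\<forall>D. downward_directed D \<and> is_inf D 0 \<longrightarrow> is_inf (T ` D) 0)"

definition riesz_subspace :: "'a::{ordered_real_vector, lattice_ab_group_add} set \<Rightarrow> bool" where
  "riesz_subspace U \<longleftrightarrow> 0 \<in> U \<and> (\<forall>x\<in>U. \<forall>y\<in>U. x + y \<in> U \<and> sup x y \<in> U \<and> inf x y \<in> U)
     \<and> (\<forall>c x. x \<in> U \<longrightarrow> c *\<^sub>R x \<in> U)"

definition cond_exp_op :: "('a::{ordered_real_vector, lattice_ab_group_add} \<Rightarrow> 'a) \<Rightarrow> 'a \<Rightarrow> bool" where
  "cond_exp_op T e \<longleftrightarrow> strictly_positive T \<and> order_continuous T \<and> linear_op T
     \<and> (\<forall>x. T (T x) = T x) \<and> T e = e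
     \<and> riesz_subspace (range T) \<and> dedekind_complete_on (range T)"

definition cond_prob_conv_0 ::
  "('a::{ordered_real_vector, lattice_ab_group_add} \<Rightarrow> 'a) \<Rightarrow> 'a \<Rightarrow> ('i::preorder \<Rightarrow> 'a) \<Rightarrow> bool" where
  "cond_prob_conv_0 T e x \<longleftrightarrow>
     (\<forall>\<epsilon>>0. order_conv_0 (\<lambda>a. T (band_proj (posp (absv (x a) - \<epsilon> *\<^sub>R e)) e)))"

end

theory Submission
  imports Defs
begin

context
  fixes dummy :: "'a::{ordered_real_vector, lattice_ab_group_add}"
begin
end

lemma le_absv: "(x::'a::{ordered_real_vector, lattice_ab_group_add}) \<le> absv x" "- x \<le> absv x"
  by (simp_all add: absv_def)

lemma absv_nonneg: "0 \<le> absv (x::'a::{ordered_real_vector, lattice_ab_group_add})"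
proof -
  have "x + - x \<le> absv x + absv x" using le_absv[of x] by (rule add_mono)
  then have "0 \<le> absv x + absv x" by simp
  thus ?thesis by simp
qed

lemma absv_pos: "0 \<le> (x::'a::{ordered_real_vector, lattice_ab_group_add}) \<Longrightarrow> absv x = x"
  unfolding absv_def
  by (metis neg_le_0_iff_le order_trans sup.absorb1)

lemma absv_zero_iff: "absv (x::'a::{ordered_real_vector, lattice_ab_group_add}) = 0 \<longleftrightarrow> x = 0"
  unfolding absv_def by simp

lemma inf_add_le:
  fixes a b c :: "'a::{ordered_real_vector, lattice_ab_group_add}"
  assumes "0 \<le> a" "0 \<le> b" "0 \<le> c"
  shows "inf a (b + c) \<le> inf a b + inf a c"
proof -
  have "inf a b + inf a c = inf (inf (a + a) (b + a)) (inf (a + c) (b + c))"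
    by (simp add: add_inf_distrib_left add_inf_distrib_right)
  moreover have "inf a (b + c) \<le> inf (inf (a + a) (b + a)) (inf (a + c) (b + c))"
  proof -
    have "a \<le> a + a" "a \<le> b + a" "a \<le> a + c" using assms by (simp_all add: add_increasing add_increasing2)
    thus ?thesis by (meson inf.coboundedI1 inf_le2 le_inf_iff)
  qed
  ultimately show ?thesis by simp
qed

lemma disj_add:
  fixes a b c :: "'a::{ordered_real_vector, lattice_ab_group_add}"
  assumes "0 \<le> a" "0 \<le> b" "0 \<le> c" "inf a b = 0" "inf a c = 0"
  shows "inf a (b + c) = 0"
proof -
  have "inf a (b + c) \<le> 0" using inf_add_le[OF assms(1-3)] assms(4,5) by simp
  moreover have "0 \<le> inf a (b + c)" using assms by (simp add: add_nonneg_nonneg)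
  ultimately show ?thesis by simp
qed

lemma disj_scale:
  fixes a b :: "'a::{ordered_real_vector, lattice_ab_group_add}"
  assumes "0 \<le> a" "0 \<le> b" "inf a b = 0"
  shows "inf a (real n *\<^sub>R b) = 0"
proof (induction n)
  case 0
  then show ?case using assms by (simp add: inf.absorb2)
next
  case (Suc n)
  have "real (Suc n) *\<^sub>R b = b + real n *\<^sub>R b" by (simp add: scaleR_left_distrib)
  moreover have "0 \<le> real n *\<^sub>R b" using assms by (simp add: scaleR_nonneg_nonneg)
  ultimately show ?case using disj_add[OF assms(1,2)] Suc assms by simp
qed

lemma absv_triangle:
  fixes a b :: "'a::{ordered_real_vector, lattice_ab_group_add}"
  shows "absv (a - b) \<le> absv a + absv b"
proof -
  have 1: "a - b \<le> absv a + absv b"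
    using add_mono[OF le_absv(1)[of a] le_absv(2)[of b]] by simp
  have 2: "- (a - b) \<le> absv a + absv b"
    using add_mono[OF le_absv(2)[of a] le_absv(1)[of b]] by simp
  show ?thesis using 1 2 unfolding absv_def[of "a - b"] by simp
qed

lemma disj_compl_diff:
  fixes a b :: "'a::{ordered_real_vector, lattice_ab_group_add}"
  assumes "a \<in> disj_compl S" "b \<in> disj_compl S"
  shows "a - b \<in> disj_compl S"
  unfolding disj_compl_def
proof (intro CollectI ballI)
  fix s assume s: "s \<in> S"
  have "inf (absv (a - b)) (absv s) \<le> inf (absv s) (absv a + absv b)"
    using absv_triangle[of a b] by (metis inf.commute inf_mono order_refl)
  also have "\<dots> \<le> inf (absv s) (absv a) + inf (absv s) (absv b)"
    by (rule inf_add_le) (simp_all add: absv_nonneg)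
  also have "\<dots> = 0" using assms s unfolding disj_compl_def by (simp add: inf.commute[of "absv s"])
  finally have "inf (absv (a - b)) (absv s) \<le> 0" .
  moreover have "0 \<le> inf (absv (a - b)) (absv s)" by (simp add: absv_nonneg)
  ultimately show "inf (absv (a - b)) (absv s) = 0" by simp
qed

lemma BdB_zero:
  fixes v :: "'a::{ordered_real_vector, lattice_ab_group_add}"
  assumes "v \<in> disj_compl B" "v \<in> B"
  shows "v = 0"
proof -
  have "inf (absv v) (absv v) = 0" using assms unfolding disj_compl_def by auto
  then show ?thesis by (simp add: absv_zero_iff)
qed

lemma band_unique:
  fixes e :: "'a::{ordered_real_vector, lattice_ab_group_add}"
  assumes "p1 \<in> band_gen y" "e - p1 \<in> disj_compl (band_gen y)"
    "p2 \<in> band_gen y" "e - p2 \<in> disj_compl (band_gen y)"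
  shows "p1 = p2"
proof -
  have "p1 - p2 \<in> band_gen y" using assms(1,3) unfolding band_gen_def by (rule disj_compl_diff)
  moreover have "(e - p2) - (e - p1) \<in> disj_compl (band_gen y)"
    using assms(4,2) by (rule disj_compl_diff)
  then have "p1 - p2 \<in> disj_compl (band_gen y)" by simp
  ultimately have "p1 - p2 = 0" using BdB_zero by blast
  thus ?thesis by simp
qed

lemma band_proj_eq:
  fixes e :: "'a::{ordered_real_vector, lattice_ab_group_add}"
  assumes "p \<in> band_gen y" "e - p \<in> disj_compl (band_gen y)"
  shows "band_proj y e = p"
  unfolding band_proj_def
  by (rule the_equality) (use assms band_unique in blast)+

lemma disj_to_compl:
  fixes v :: "'a::{ordered_real_vector, lattice_ab_group_add}"
  assumes "inf (absv v) (absv y) = 0"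
  shows "v \<in> disj_compl (band_gen y)"
  using assms unfolding band_gen_def disj_compl_def by (auto simp: inf_commute)

lemma inf_sup_zero:
  fixes w p :: "'a::{ordered_real_vector, lattice_ab_group_add}"
  assumes "is_sup_in UNIV S p" "\<forall>s\<in>S. inf w s = 0" "0 \<le> w" "0 \<le> p"
  shows "inf w p = 0"
proof -
  have "\<forall>s\<in>S. s \<le> sup w p - w"
  proof
    fix s assume s: "s \<in> S"
    have "s \<le> p" using assms(1) s unfolding is_sup_in_def by auto
    have "w + s = sup w s + inf w s" by (rule add_eq_inf_sup)
    then have "s = sup w s - w" using assms(2) s by (simp add: algebra_simps)
    also have "\<dots> \<le> sup w p - w" using \<open>s \<le> p\<close> by (simp add: sup.coboundedI2)
    finally show "s \<le> sup w p - w" .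
  qed
  then have "p \<le> sup w p - w" using assms(1) unfolding is_sup_in_def by auto
  moreover have "w + p = sup w p + inf w p" by (rule add_eq_inf_sup)
  ultimately have "inf w p \<le> 0" by (simp add: algebra_simps)
  moreover have "0 \<le> inf w p" using assms by simp
  ultimately show ?thesis by simp
qed


lemma proj_exists:
  fixes e y :: "'a::{ordered_real_vector, lattice_ab_group_add}"
  assumes DC: "dedekind_complete_on (UNIV::'a set)" and e0: "0 \<le> e" and y0: "0 \<le> y"
  shows "\<exists>p. 0 \<le> p \<and> p \<le> e \<and> inf (e - p) y = 0 \<and> p \<in> band_gen y \<and> e - p \<in> disj_compl (band_gen y)"
proof -
  define S where "S = range (\<lambda>n::nat. inf e (real n *\<^sub>R y))"
  have "S \<noteq> {}" "\<forall>s\<in>S. s \<le> e" unfolding S_def by auto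
  then obtain p where p: "is_sup_in UNIV S p"
    using DC unfolding dedekind_complete_on_def
    by (metis UNIV_I subset_UNIV)
  have ub: "\<And>n::nat. inf e (real n *\<^sub>R y) \<le> p" using p unfolding is_sup_in_def S_def by auto
  have lub: "\<And>b. (\<forall>n::nat. inf e (real n *\<^sub>R y) \<le> b) \<Longrightarrow> p \<le> b"
    using p unfolding is_sup_in_def S_def by auto
  have p0: "0 \<le> p" using ub[of 0] e0 by (simp add: inf.absorb2)
  have pe: "p \<le> e" using lub by auto
  define u where "u = inf (e - p) y"
  have u0: "0 \<le> u" unfolding u_def using pe y0 by simp
  have "\<forall>n::nat. inf e (real n *\<^sub>R y) \<le> p - u"
  proof
    fix n :: nat
    have "inf e (real n *\<^sub>R y) + u \<le> p + (e - p)"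
      using ub[of n] by (rule add_mono) (simp add: u_def)
    moreover have "inf e (real n *\<^sub>R y) + u \<le> real n *\<^sub>R y + y"
      by (rule add_mono) (simp_all add: u_def)
    moreover have "real n *\<^sub>R y + y = real (Suc n) *\<^sub>R y" by (simp add: scaleR_left_distrib)
    ultimately have "inf e (real n *\<^sub>R y) + u \<le> inf e (real (Suc n) *\<^sub>R y)" by simp
    also have "\<dots> \<le> p" by (rule ub)
    finally show "inf e (real n *\<^sub>R y) \<le> p - u" by (simp add: algebra_simps)
  qed
  then have "p \<le> p - u" by (rule lub)
  then have u_eq: "u = 0" using u0 by simp
  have "p \<in> band_gen y"
    unfolding band_gen_def disj_compl_def[of "disj_compl {y}"]
  proof (intro CollectI ballI)
    fix w assume w: "w \<in> disj_compl {y}"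
    then have wy: "inf (absv w) y = 0" unfolding disj_compl_def using absv_pos[OF y0] by auto
    have "\<forall>s\<in>S. inf (absv w) s = 0"
    proof
      fix s assume "s \<in> S"
      then obtain n where sn: "s = inf e (real n *\<^sub>R y)" unfolding S_def by auto
      have "inf (absv w) s \<le> inf (absv w) (real n *\<^sub>R y)" unfolding sn by (simp add: inf.coboundedI2)
      also have "\<dots> = 0" by (rule disj_scale[OF absv_nonneg y0 wy])
      finally have "inf (absv w) s \<le> 0" .
      moreover have "0 \<le> inf (absv w) s" using sn e0 y0 absv_nonneg[of w] by (simp add: scaleR_nonneg_nonneg)
      ultimately show "inf (absv w) s = 0" by (rule antisym)
    qed
    then have "inf (absv w) p = 0" by (rule inf_sup_zero[OF p _ absv_nonneg p0])
    then show "inf (absv p) (absv w) = 0" using absv_pos[OF p0] by (simp add: inf.commute)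
  qed
  moreover have "e - p \<in> disj_compl (band_gen y)"
    by (rule disj_to_compl) (use u_eq pe y0 in \<open>simp add: u_def absv_pos\<close>)
  moreover have "inf (e - p) y = 0" using u_eq unfolding u_def .
  ultimately show ?thesis using p0 pe by blast
qed

lemma band_proj_props:
  fixes e y :: "'a::{ordered_real_vector, lattice_ab_group_add}"
  assumes DC: "dedekind_complete_on (UNIV::'a set)" and e0: "0 \<le> e" and y0: "0 \<le> y"
  shows "0 \<le> band_proj y e \<and> band_proj y e \<le> e \<and> inf (e - band_proj y e) y = 0"
proof -
  obtain p where "0 \<le> p \<and> p \<le> e \<and> inf (e - p) y = 0 \<and> p \<in> band_gen y \<and> e - p \<in> disj_compl (band_gen y)"
    using proj_exists[OF assms] by blast
  moreover then have "band_proj y e = p" using band_proj_eq by blast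
  ultimately show ?thesis by simp
qed

lemma archimedean_DC:
  fixes e z :: "'a::{ordered_real_vector, lattice_ab_group_add}"
  assumes DC: "dedekind_complete_on (UNIV::'a set)" and e0: "0 \<le> e"
    and h: "\<forall>\<epsilon>>0. z \<le> \<epsilon> *\<^sub>R e"
  shows "z \<le> 0"
proof -
  define S where "S = range (\<lambda>n::nat. real n *\<^sub>R z)"
  have bnd: "\<forall>s\<in>S. s \<le> e"
  proof
    fix s assume "s \<in> S"
    then obtain n where sn: "s = real n *\<^sub>R z" unfolding S_def by auto
    show "s \<le> e"
    proof (cases "n = 0")
      case True then show ?thesis using sn e0 by simp
    next
      case False
      then have "z \<le> (1 / real n) *\<^sub>R e" using h by simp
      then have "real n *\<^sub>R z \<le> real n *\<^sub>R ((1 / real n) *\<^sub>R e)" by (rule scaleR_left_mono) simp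
      then show ?thesis using sn False by simp
    qed
  qed
  have "S \<noteq> {}" unfolding S_def by auto
  then obtain s where s: "is_sup_in UNIV S s" using DC bnd unfolding dedekind_complete_on_def
    by (metis UNIV_I subset_UNIV)
  have "\<forall>t\<in>S. t \<le> s - z"
  proof
    fix t assume "t \<in> S"
    then obtain n where tn: "t = real n *\<^sub>R z" unfolding S_def by auto
    have "real (Suc n) *\<^sub>R z \<le> s" using s unfolding is_sup_in_def S_def by blast
    then show "t \<le> s - z" unfolding tn by (simp add: scaleR_left_distrib algebra_simps)
  qed
  then have "s \<le> s - z" using s unfolding is_sup_in_def by blast
  then show ?thesis by simp
qed


theorem lemmaS12:
  fixes T :: "'a::{ordered_real_vector, lattice_ab_group_add} \<Rightarrow> 'a"
    and e :: 'a
    and x :: "'i::preorder \<Rightarrow> 'a"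
  assumes "dedekind_complete TYPE('a)"
    and "weak_order_unit e"
    and "cond_exp_op T e"
    and "directed_index TYPE('i)"
    and "decreasing_net x"
    and "\<forall>a. 0 \<le> x a"
    and "cond_prob_conv_0 T e x"
  shows "decr_to_0 x"
proof -
  have DC: "dedekind_complete_on (UNIV::'a set)" using assms(1) unfolding dedekind_complete_def .
  have e0: "0 \<le> e" and wu: "\<And>v. inf (absv v) e = 0 \<Longrightarrow> v = 0"
    using assms(2) unfolding weak_order_unit_def by auto
  have Tpos: "\<And>v. 0 \<le> v \<Longrightarrow> 0 \<le> T v" and Tstr: "\<And>v. 0 < v \<Longrightarrow> 0 < T v"
    using assms(3) unfolding cond_exp_op_def strictly_positive_def by auto
  have Tadd: "\<And>a b. T (a + b) = T a + T b"
    using assms(3) unfolding cond_exp_op_def linear_op_def by auto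
  have Tmono: "\<And>a b. a \<le> b \<Longrightarrow> T a \<le> T b"
  proof -
    fix a b :: 'a assume "a \<le> b"
    then have "0 \<le> T (b - a)" by (simp add: Tpos)
    moreover have "T b = T (b - a) + T a" using Tadd[of "b - a" a] by simp
    ultimately show "T a \<le> T b" by simp
  qed
  have low: "b \<le> 0" if lb: "\<forall>s\<in>range x. b \<le> s" for b
  proof -
    define z where "z = sup b 0"
    have z0: "0 \<le> z" unfolding z_def by simp
    have zx: "\<And>a. z \<le> x a" unfolding z_def using lb assms(6) by simp
    have key: "\<forall>\<epsilon>>0. z \<le> \<epsilon> *\<^sub>R e"
    proof (intro allI impI)
      fix \<epsilon> :: real assume "\<epsilon> > 0"
      define y where "y = posp (z - \<epsilon> *\<^sub>R e)"
      define ya where "ya a = posp (x a - \<epsilon> *\<^sub>R e)" for a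
      have y0: "0 \<le> y" unfolding y_def posp_def by simp
      have ya0: "\<And>a. 0 \<le> ya a" unfolding ya_def posp_def by simp
      have yya: "\<And>a. y \<le> ya a" unfolding y_def ya_def posp_def
        using zx by (meson diff_right_mono sup_mono order_refl)
      define p where "p a = band_proj (ya a) e" for a
      have pp: "\<And>a. 0 \<le> p a \<and> p a \<le> e \<and> inf (e - p a) (ya a) = 0"
        unfolding p_def by (rule band_proj_props[OF DC e0 ya0])
      have le: "\<And>a. inf e y \<le> p a"
      proof -
        fix a
        have "inf e y \<le> inf (ya a) (p a + (e - p a))" using yya[of a]
          by (simp add: inf.coboundedI2 inf_commute le_infI1)
        also have "\<dots> \<le> inf (ya a) (p a) + inf (ya a) (e - p a)"
          by (rule inf_add_le) (use ya0 pp in auto)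
        also have "\<dots> = inf (ya a) (p a)" using pp[of a] by (simp add: inf.commute)
        also have "\<dots> \<le> p a" by simp
        finally show "inf e y \<le> p a" .
      qed
      have "order_conv_0 (\<lambda>a. T (band_proj (posp (absv (x a) - \<epsilon> *\<^sub>R e)) e))"
        using assms(7) \<open>\<epsilon> > 0\<close> unfolding cond_prob_conv_0_def by blast
      moreover have "(\<lambda>a. T (band_proj (posp (absv (x a) - \<epsilon> *\<^sub>R e)) e)) = (\<lambda>a. T (p a))"
        unfolding p_def ya_def using assms(6) by (simp add: absv_pos)
      ultimately have "order_conv_0 (\<lambda>a. T (p a))" by simp
      then obtain Z where Zi: "is_inf Z 0" and Zc: "\<forall>z\<in>Z. \<exists>a0. \<forall>a. a0 \<le> a \<longrightarrow> absv (T (p a)) \<le> z"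
        unfolding order_conv_0_def by blast
      have "\<forall>s\<in>Z. T (inf e y) \<le> s"
      proof
        fix s assume "s \<in> Z"
        then obtain a0 where "\<forall>a. a0 \<le> a \<longrightarrow> absv (T (p a)) \<le> s" using Zc by blast
        then have "absv (T (p a0)) \<le> s" by simp
        moreover have "T (inf e y) \<le> T (p a0)" using le by (rule Tmono)
        ultimately show "T (inf e y) \<le> s" using le_absv(1)[of "T (p a0)"] by order
      qed
      then have "T (inf e y) \<le> 0" using Zi unfolding is_inf_def by blast
      moreover have "0 \<le> T (inf e y)" using e0 y0 by (simp add: Tpos)
      ultimately have T0: "T (inf e y) = 0" by simp
      have "inf e y = 0"
      proof (rule ccontr)
        assume "inf e y \<noteq> 0"
        then have "0 < inf e y" using e0 y0 by (simp add: order_less_le)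
        then have "0 < T (inf e y)" by (rule Tstr)
        then show False using T0 by simp
      qed
      then have "inf (absv y) e = 0" using absv_pos[OF y0] by (simp add: inf.commute)
      then have "y = 0" by (rule wu)
      then have "sup (z - \<epsilon> *\<^sub>R e) 0 = 0" unfolding y_def posp_def .
      then have "z - \<epsilon> *\<^sub>R e \<le> 0" by (metis sup.cobounded1)
      then show "z \<le> \<epsilon> *\<^sub>R e" by simp
    qed
    have "z \<le> 0" by (rule archimedean_DC[OF DC e0 key])
    then show "b \<le> 0" unfolding z_def by simp
  qed
  show ?thesis
    unfolding decr_to_0_def is_inf_def using assms(5,6) low by auto
qed

end
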